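(* Let $\bar\eta=(\bar\pi,\bar\mu_0,\bar\mu_1,\bar f_{j|-j})$ be arbitrary candidate nuisance functions (not necessarily equal to the true ones $\eta=(\pi,\mu_0,\mu_1,f_{j|-j})$), with $0<\bar\pi<1$ and $\bar f_{j|-j}>0$. Then $$\mathbb E\left[\varphi^{\mathrm{pd}}_j(\mathbf Z;\bar\eta)\mid V_j=v_j\right]=\theta_j(v_j)$$ provided that either $(\bar\mu_0,\bar\mu_1)=(\mu_0,\mu_1)$ or $(\bar\pi,\bar f_{j|-j})=(\pi,f_{j|-j})$.
   Context: Observed data $\mathbf Z=(\mathbf X,A,Y)$ with covariates $\mathbf X$, binary treatment $A\in\{0,1\}$, real outcome $Y$, drawn from $\mathbb P$, with $0<\pi(\mathbf X)<1$. $\mathbf V=(V_j,\mathbf V_{-j})$ is a subvector of $\mathbf X$, with $V_j$ a continuous coordinate and $\mathbf V_{-j}$ the remaining coordinates of $\mathbf V$. True nuisances: $\pi(\mathbf X)=\mathbb P(A=1\mid\mathbf X)$, $\mu_a(\mathbf X)=\mathbb E[Y\mid A=a,\mathbf X]$, and $f_{j|-j}(v_j\mid\boldsymbol v_{-j})$ the conditional density of $V_j$ given $\mathbf V_{-j}$. Let $\tau_x(\mathbf X)=\mu_1(\mathbf X)-\mu_0(\mathbf X)$, $\tau_v(\boldsymbol v)=\mathbb E[\tau_x(\mathbf X)\mid\mathbf V=\boldsymbol v]$ and the partial dependence function $\theta_j(v_j)=\int\tau_v(v_j,\boldsymbol v_{-j})\,d\mathbb P(\boldsymbol v_{-j})$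 (integration against the marginal law of $\mathbf V_{-j}$). For nuisances $\bar\eta$, write $\bar\tau_x=\bar\mu_1-\bar\mu_0$, $\bar\mu_A$ for $\bar\mu_a$ at $a=A$, and define the pseudo-outcome $$\varphi^{\mathrm{pd}}_j(\mathbf Z;\bar\eta)=\left[\frac{\{A-\bar\pi(\mathbf X)\}\{Y-\bar\mu_A(\mathbf X)\}}{\bar\pi(\mathbf X)\{1-\bar\pi(\mathbf X)\}}+\bar\tau_x(\mathbf X)-\mathbb E\{\bar\tau_x(\mathbf X)\mid\mathbf V\}\right]\frac{\int\bar f_{j|-j}(V_j\mid\boldsymbol v_{-j})\,d\mathbb P(\boldsymbol v_{-j})}{\bar f_{j|-j}(V_j\mid\mathbf V_{-j})}+\int\mathbb E[\bar\tau_x(\mathbf X)\mid V_j,\mathbf V_{-j}=\boldsymbol v_{-j}]\,d\mathbb P(\boldsymbol v_{-j}),$$ where the conditional expectations and the marginal law $\mathbb P(\boldsymbol v_{-j})$ are under the true $\mathbb P$. *)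

theory Defs
  imports "HOL-Probability.Probability"
begin

definition cond_fn ::
  "'o measure \<Rightarrow> ('o \<Rightarrow> 'b) \<Rightarrow> 'b measure \<Rightarrow> ('o \<Rightarrow> real) \<Rightarrow> 'b \<Rightarrow> real" where
  "cond_fn M V N g = (SOME h. h \<in> borel_measurable N \<and>
     (AE \<omega> in M. real_cond_exp M (vimage_algebra (space M) V N) g \<omega> = h (V \<omega>)))"

definition marg_Vm :: "'o measure \<Rightarrow> ('o \<Rightarrow> 'x) \<Rightarrow> 'w measure \<Rightarrow> ('x \<Rightarrow> 'w) \<Rightarrow> 'w measure" where
  "marg_Vm M X SW vm = distr M SW (\<lambda>\<omega>. vm (X \<omega>))"

definition cond_on_V ::
  "'o measure \<Rightarrow> ('o \<Rightarrow> 'x) \<Rightarrow> 'w measure \<Rightarrow> ('x \<Rightarrow> real) \<Rightarrow> ('x \<Rightarrow> 'w)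
   \<Rightarrow> ('x \<Rightarrow> real) \<Rightarrow> real \<times> 'w \<Rightarrow> real" where
  "cond_on_V M X SW vj vm t = cond_fn M (\<lambda>\<omega>. (vj (X \<omega>), vm (X \<omega>))) (borel \<Otimes>\<^sub>M SW) (\<lambda>\<omega>. t (X \<omega>))"

text \<open>Partial dependence function theta_j(v_j) = int tau_v(v_j, w) dP(w),
  with tau_x = mu1 - mu0.\<close>
definition theta_pd ::
  "'o measure \<Rightarrow> ('o \<Rightarrow> 'x) \<Rightarrow> 'w measure \<Rightarrow> ('x \<Rightarrow> real) \<Rightarrow> ('x \<Rightarrow> 'w)
   \<Rightarrow> ('x \<Rightarrow> real) \<Rightarrow> ('x \<Rightarrow> real) \<Rightarrow> real \<Rightarrow> real" where
  "theta_pd M X SW vj vm mu0 mu1 v =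
     (\<integral>w. cond_on_V M X SW vj vm (\<lambda>x. mu1 x - mu0 x) (v, w) \<partial>(marg_Vm M X SW vm))"

definition ipw_res ::
  "('o \<Rightarrow> 'x) \<Rightarrow> ('o \<Rightarrow> real) \<Rightarrow> ('o \<Rightarrow> real) \<Rightarrow> ('x \<Rightarrow> real) \<Rightarrow> ('x \<Rightarrow> real)
   \<Rightarrow> ('x \<Rightarrow> real) \<Rightarrow> 'o \<Rightarrow> real" where
  "ipw_res X A Y pib mu0b mu1b \<omega> =
     (A \<omega> - pib (X \<omega>)) * (Y \<omega> - (if A \<omega> = 1 then mu1b (X \<omega>) else mu0b (X \<omega>)))
       / (pib (X \<omega>) * (1 - pib (X \<omega>)))"

definition phi_pd ::
  "'o measure \<Rightarrow> ('o \<Rightarrow> 'x) \<Rightarrow> ('o \<Rightarrow> real) \<Rightarrow> ('o \<Rightarrow> real) \<Rightarrow> 'w measure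
   \<Rightarrow> ('x \<Rightarrow> real) \<Rightarrow> ('x \<Rightarrow> 'w)
   \<Rightarrow> ('x \<Rightarrow> real) \<Rightarrow> ('x \<Rightarrow> real) \<Rightarrow> ('x \<Rightarrow> real) \<Rightarrow> (real \<Rightarrow> 'w \<Rightarrow> real)
   \<Rightarrow> 'o \<Rightarrow> real" where
  "phi_pd M X A Y SW vj vm pib mu0b mu1b fb \<omega> =
     (let x = X \<omega>;
          Q = marg_Vm M X SW vm;
          g = cond_on_V M X SW vj vm (\<lambda>x. mu1b x - mu0b x)
      in (ipw_res X A Y pib mu0b mu1b \<omega> + (mu1b x - mu0b x) - g (vj x, vm x))
           * ((\<integral>w. fb (vj x) w \<partial>Q) / fb (vj x) (vm x))
         + (\<integral>w. g (vj x, w) \<partial>Q))"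

end

theory Submission
  imports Defs
begin


lemma doob_dynkin_nonneg:
  assumes V: "V \<in> \<Omega> \<rightarrow> space N"
    and u: "u \<in> borel_measurable (vimage_algebra \<Omega> V N)" "\<And>x. 0 \<le> u x"
  shows "\<exists>h \<in> borel_measurable N. \<forall>\<omega>\<in>\<Omega>. u \<omega> = (h (V \<omega>) :: real)"
  using u
proof (induction rule: borel_measurable_induct_real)
  case (set A)
  then obtain B where B: "B \<in> sets N" "A = V -` B \<inter> \<Omega>"
    using sets_vimage_algebra2[OF V] by auto
  show ?case
    by (rule bexI[of _ "indicator B"]) (use B in \<open>auto simp: indicator_def\<close>)
next
  case (mult u c)
  then obtain h where h: "h \<in> borel_measurable N" "\<forall>\<omega>\<in>\<Omega>. u \<omega> = h (V \<omega>)" by blast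
  note [measurable] = h(1)
  have "(\<lambda>y. c * h y) \<in> borel_measurable N" by measurable
  with h(2) show ?case by (intro bexI[of _ "\<lambda>y. c * h y"]) simp_all
next
  case (add u v)
  then obtain h g where hg: "h \<in> borel_measurable N" "\<forall>\<omega>\<in>\<Omega>. u \<omega> = h (V \<omega>)"
     "g \<in> borel_measurable N" "\<forall>\<omega>\<in>\<Omega>. v \<omega> = g (V \<omega>)" by blast
  note [measurable] = hg(1,3)
  have "(\<lambda>y. g y + h y) \<in> borel_measurable N" by measurable
  with hg show ?case by (intro bexI[of _ "\<lambda>y. g y + h y"]) simp_all
next
  case (seq U)
  then have "\<forall>i. \<exists>h \<in> borel_measurable N. \<forall>\<omega>\<in>\<Omega>. U i \<omega> = h (V \<omega>)" by blast
  then obtain h where h: "\<And>i. h i \<in> borel_measurable N" "\<And>i \<omega>. \<omega>\<in>\<Omega> \<Longrightarrow> U i \<omega> = h i (V \<omega>)"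
    by metis
  have hm: "(\<lambda>y. lim (\<lambda>i. h i y)) \<in> borel_measurable N"
    by (rule borel_measurable_lim_metric, rule h(1))
  show ?case
  proof (intro bexI[OF _ hm] ballI)
    fix \<omega> assume "\<omega> \<in> \<Omega>"
    then have "(\<lambda>i. U i \<omega>) \<longlonglongrightarrow> u \<omega>" using seq by (simp add: space_vimage_algebra)
    then have "(\<lambda>i. h i (V \<omega>)) \<longlonglongrightarrow> u \<omega>" using h(2) \<open>\<omega> \<in> \<Omega>\<close> by simp
    then show "u \<omega> = lim (\<lambda>i. h i (V \<omega>))" by (simp add: limI)
  qed
qed

lemma doob_dynkin_real:
  assumes V: "V \<in> \<Omega> \<rightarrow> space N"
    and u: "u \<in> borel_measurable (vimage_algebra \<Omega> V N)"
  shows "\<exists>h \<in> borel_measurable N. \<forall>\<omega>\<in>\<Omega>. u \<omega> = (h (V \<omega>) :: real)"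
proof -
  note [measurable] = u
  have m1: "(\<lambda>x. max (u x) 0) \<in> borel_measurable (vimage_algebra \<Omega> V N)" by measurable
  have m2: "(\<lambda>x. max (- u x) 0) \<in> borel_measurable (vimage_algebra \<Omega> V N)" by measurable
  obtain h1 where h1: "h1 \<in> borel_measurable N" "\<forall>\<omega>\<in>\<Omega>. max (u \<omega>) 0 = h1 (V \<omega>)"
    using doob_dynkin_nonneg[OF V m1] by force
  obtain h2 where h2: "h2 \<in> borel_measurable N" "\<forall>\<omega>\<in>\<Omega>. max (- u \<omega>) 0 = h2 (V \<omega>)"
    using doob_dynkin_nonneg[OF V m2] by force
  note [measurable] = h1(1) h2(1)
  have hm: "(\<lambda>y. h1 y - h2 y) \<in> borel_measurable N" by measurable
  show ?thesis
  proof (intro bexI[OF _ hm] ballI)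
    fix \<omega> assume "\<omega> \<in> \<Omega>"
    then have "h1 (V \<omega>) = max (u \<omega>) 0" "h2 (V \<omega>) = max (- u \<omega>) 0" using h1 h2 by auto
    then show "u \<omega> = h1 (V \<omega>) - h2 (V \<omega>)" by simp
  qed
qed


lemma meas_vimage:
  assumes "U \<in> measurable M N" "g \<in> measurable N K"
  shows "(\<lambda>\<omega>. g (U \<omega>)) \<in> measurable (vimage_algebra (space M) U N) K"
proof -
  have "U \<in> space M \<rightarrow> space N" using assms(1) by (auto simp: measurable_def)
  from measurable_comp[OF measurable_vimage_algebra1[OF this] assms(2)] show ?thesis
    by (simp add: o_def)
qed

lemma subalg_vimage:
  assumes "U \<in> measurable M N"
  shows "subalgebra M (vimage_algebra (space M) U N)"
  unfolding subalgebra_def using sets_image_in_sets[OF refl assms] by simp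

lemma sfs_vimage:
  assumes "prob_space M" "U \<in> measurable M N"
  shows "sigma_finite_subalgebra M (vimage_algebra (space M) U N)"
proof -
  interpret prob_space M by fact
  have "finite_measure_subalgebra M (vimage_algebra (space M) U N)"
    unfolding finite_measure_subalgebra_def finite_measure_subalgebra_axioms_def
    using subalg_vimage[OF assms(2)] by (simp add: finite_measure_axioms)
  then show ?thesis by (rule finite_measure_subalgebra_is_sigma_finite)
qed

lemma subalg_vimage2:
  assumes U: "U \<in> measurable M NU" and g: "g \<in> measurable NU NV" and V: "\<And>\<omega>. \<omega> \<in> space M \<Longrightarrow> V \<omega> = g (U \<omega>)"
  shows "subalgebra (vimage_algebra (space M) U NU) (vimage_algebra (space M) V NV)"
proof -
  have "V \<in> measurable (vimage_algebra (space M) U NU) NV"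
    using meas_vimage[OF U g] by (subst measurable_cong[where g="\<lambda>\<omega>. g (U \<omega>)"]) (simp_all add: V)
  from sets_image_in_sets[OF _ this] show ?thesis unfolding subalgebra_def by simp
qed

lemma cond_fn_spec:
  assumes "prob_space M" "V \<in> measurable M N"
  shows "cond_fn M V N g \<in> borel_measurable N"
    "AE \<omega> in M. real_cond_exp M (vimage_algebra (space M) V N) g \<omega> = cond_fn M V N g (V \<omega>)"
proof -
  have V: "V \<in> space M \<rightarrow> space N" using assms(2) by (auto simp: measurable_def)
  obtain h where "h \<in> borel_measurable N"
     "\<forall>\<omega>\<in>space M. real_cond_exp M (vimage_algebra (space M) V N) g \<omega> = h (V \<omega>)"
    using doob_dynkin_real[OF V borel_measurable_cond_exp] by blast
  then have "\<exists>h. h \<in> borel_measurable N \<and>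
     (AE \<omega> in M. real_cond_exp M (vimage_algebra (space M) V N) g \<omega> = h (V \<omega>))" by auto
  note sp = someI_ex[OF this]
  show "cond_fn M V N g \<in> borel_measurable N"
    unfolding cond_fn_def using sp by (rule conjunct1)
  show "AE \<omega> in M. real_cond_exp M (vimage_algebra (space M) V N) g \<omega> = cond_fn M V N g (V \<omega>)"
    unfolding cond_fn_def using sp by (rule conjunct2)
qed



lemma res_cond_XA:
  fixes M :: "'o measure" and SX :: "'x measure"
    and X :: "'o \<Rightarrow> 'x" and A Y :: "'o \<Rightarrow> real"
    and mu0 mu1 pib mu0b mu1b :: "'x \<Rightarrow> real"
  assumes P: "prob_space M"
    and X_meas: "X \<in> measurable M SX"
    and A_meas: "A \<in> borel_measurable M"
    and Y_meas: "Y \<in> borel_measurable M" and Y_int: "integrable M Y"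
    and mu0_meas: "mu0 \<in> borel_measurable SX" and mu1_meas: "mu1 \<in> borel_measurable SX"
    and pib_meas: "pib \<in> borel_measurable SX"
    and mu0b_meas: "mu0b \<in> borel_measurable SX" and mu1b_meas: "mu1b \<in> borel_measurable SX"
    and mu_true: "AE \<omega> in M.
       real_cond_exp M (vimage_algebra (space M) (\<lambda>\<omega>. (X \<omega>, A \<omega>)) (SX \<Otimes>\<^sub>M borel)) Y \<omega>
         = (if A \<omega> = 1 then mu1 (X \<omega>) else mu0 (X \<omega>))"
    and int_res: "integrable M (ipw_res X A Y pib mu0b mu1b)"
  shows "AE \<omega> in M. real_cond_exp M (vimage_algebra (space M) (\<lambda>\<omega>. (X \<omega>, A \<omega>)) (SX \<Otimes>\<^sub>M borel))
           (ipw_res X A Y pib mu0b mu1b) \<omega>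
     = (A \<omega> - pib (X \<omega>)) / (pib (X \<omega>) * (1 - pib (X \<omega>))) *
       ((if A \<omega> = 1 then mu1 (X \<omega>) else mu0 (X \<omega>)) - (if A \<omega> = 1 then mu1b (X \<omega>) else mu0b (X \<omega>)))"
proof -
  define F where "F = vimage_algebra (space M) (\<lambda>\<omega>. (X \<omega>, A \<omega>)) (SX \<Otimes>\<^sub>M borel)"
  have U: "(\<lambda>\<omega>. (X \<omega>, A \<omega>)) \<in> measurable M (SX \<Otimes>\<^sub>M borel)"
    using X_meas A_meas by (rule measurable_Pair)
  interpret S: sigma_finite_subalgebra M F unfolding F_def by (rule sfs_vimage[OF P U])
  interpret prob_space M by (rule P)
  note [measurable] = X_meas A_meas Y_meas mu0_meas mu1_meas pib_meas mu0b_meas mu1b_meas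
  define c where "c \<omega> = (A \<omega> - pib (X \<omega>)) / (pib (X \<omega>) * (1 - pib (X \<omega>)))" for \<omega>
  define mB where "mB \<omega> = (if A \<omega> = 1 then mu1b (X \<omega>) else mu0b (X \<omega>))" for \<omega>
  define mT where "mT \<omega> = (if A \<omega> = 1 then mu1 (X \<omega>) else mu0 (X \<omega>))" for \<omega>
  have "(\<lambda>\<omega>. (\<lambda>p. (snd p - pib (fst p)) / (pib (fst p) * (1 - pib (fst p)))) (X \<omega>, A \<omega>)) \<in> borel_measurable F"
    unfolding F_def by (rule meas_vimage[OF U]) measurable
  then have cF[measurable]: "c \<in> borel_measurable F" by (simp add: c_def[abs_def])
  have "(\<lambda>\<omega>. (\<lambda>p. if snd p = 1 then mu1b (fst p) else mu0b (fst p)) (X \<omega>, A \<omega>)) \<in> borel_measurable F"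
    unfolding F_def by (rule meas_vimage[OF U]) measurable
  then have mBF[measurable]: "mB \<in> borel_measurable F" by (simp only: fst_conv snd_conv mB_def[abs_def])
  have cM[measurable]: "c \<in> borel_measurable M" by (rule measurable_from_subalg[OF S.subalg cF])
  have mBM[measurable]: "mB \<in> borel_measurable M" by (rule measurable_from_subalg[OF S.subalg mBF])
  have mTM[measurable]: "mT \<in> borel_measurable M" unfolding mT_def[abs_def] by measurable
  have res_eq: "ipw_res X A Y pib mu0b mu1b = (\<lambda>\<omega>. c \<omega> * (Y \<omega> - mB \<omega>))"
    by (rule ext) (simp add: ipw_res_def c_def mB_def)
  have intcm: "integrable M (\<lambda>\<omega>. c \<omega> * (Y \<omega> - mB \<omega>))" using int_res res_eq by simp
  have YmB[measurable]: "(\<lambda>\<omega>. Y \<omega> - mB \<omega>) \<in> borel_measurable M" by measurable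
  have step1: "AE \<omega> in M. real_cond_exp M F (\<lambda>\<omega>. c \<omega> * (Y \<omega> - mB \<omega>)) \<omega>
      = c \<omega> * real_cond_exp M F (\<lambda>\<omega>. Y \<omega> - mB \<omega>) \<omega>"
    by (rule S.real_cond_exp_mult[OF cF YmB intcm])
  have step2: "AE \<omega> in M. ind \<omega> * real_cond_exp M F (\<lambda>\<omega>. Y \<omega> - mB \<omega>) \<omega> = ind \<omega> * (mT \<omega> - mB \<omega>)"
    if ind_def: "ind = (\<lambda>\<omega>. if \<bar>mB \<omega>\<bar> \<le> real n then 1 else 0 :: real)" for ind n
  proof -
    have indF[measurable]: "ind \<in> borel_measurable F" unfolding ind_def by measurable
    have indM[measurable]: "ind \<in> borel_measurable M" unfolding ind_def by measurable
    have i1: "integrable M (\<lambda>\<omega>. ind \<omega> * Y \<omega>)"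
      by (rule Bochner_Integration.integrable_bound[OF Y_int]) (auto simp: ind_def)
    have i2: "integrable M (\<lambda>\<omega>. ind \<omega> * mB \<omega>)"
      by (rule Bochner_Integration.integrable_bound[OF integrable_const[of "real n"]]) (auto simp: ind_def)
    have eq: "(\<lambda>\<omega>. ind \<omega> * (Y \<omega> - mB \<omega>)) = (\<lambda>\<omega>. ind \<omega> * Y \<omega> - ind \<omega> * mB \<omega>)"
      by (simp add: fun_eq_iff algebra_simps)
    have i3: "integrable M (\<lambda>\<omega>. ind \<omega> * (Y \<omega> - mB \<omega>))" unfolding eq using i1 i2 by (rule Bochner_Integration.integrable_diff)
    have e1: "AE \<omega> in M. real_cond_exp M F (\<lambda>\<omega>. ind \<omega> * (Y \<omega> - mB \<omega>)) \<omega> = ind \<omega> * real_cond_exp M F (\<lambda>\<omega>. Y \<omega> - mB \<omega>) \<omega>"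
      by (rule S.real_cond_exp_mult[OF indF YmB i3])
    have e2: "AE \<omega> in M. real_cond_exp M F (\<lambda>\<omega>. ind \<omega> * Y \<omega> - ind \<omega> * mB \<omega>) \<omega>
        = real_cond_exp M F (\<lambda>\<omega>. ind \<omega> * Y \<omega>) \<omega> - real_cond_exp M F (\<lambda>\<omega>. ind \<omega> * mB \<omega>) \<omega>"
      by (rule S.real_cond_exp_diff[OF i1 i2])
    have e3: "AE \<omega> in M. real_cond_exp M F (\<lambda>\<omega>. ind \<omega> * Y \<omega>) \<omega> = ind \<omega> * real_cond_exp M F Y \<omega>"
      by (rule S.real_cond_exp_mult[OF indF Y_meas i1])
    have imF: "(\<lambda>\<omega>. ind \<omega> * mB \<omega>) \<in> borel_measurable F" by measurable
    have e4: "AE \<omega> in M. real_cond_exp M F (\<lambda>\<omega>. ind \<omega> * mB \<omega>) \<omega> = ind \<omega> * mB \<omega>"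
      by (rule S.real_cond_exp_F_meas[OF i2 imF])
    have e5: "AE \<omega> in M. real_cond_exp M F Y \<omega> = mT \<omega>"
      using mu_true unfolding F_def mT_def .
    show ?thesis using e1 e2 e3 e4 e5 unfolding eq by eventually_elim (simp add: algebra_simps)
  qed
  have "AE \<omega> in M. \<forall>n::nat. (if \<bar>mB \<omega>\<bar> \<le> real n then 1 else 0 :: real) * real_cond_exp M F (\<lambda>\<omega>. Y \<omega> - mB \<omega>) \<omega>
         = (if \<bar>mB \<omega>\<bar> \<le> real n then 1 else 0 :: real) * (mT \<omega> - mB \<omega>)"
    unfolding AE_all_countable using step2 by blast
  then have step3: "AE \<omega> in M. real_cond_exp M F (\<lambda>\<omega>. Y \<omega> - mB \<omega>) \<omega> = mT \<omega> - mB \<omega>"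
  proof (rule AE_mp, intro AE_I2 impI)
    fix \<omega> assume H: "\<forall>n::nat. (if \<bar>mB \<omega>\<bar> \<le> real n then 1 else 0 :: real) * real_cond_exp M F (\<lambda>\<omega>. Y \<omega> - mB \<omega>) \<omega>
         = (if \<bar>mB \<omega>\<bar> \<le> real n then 1 else 0 :: real) * (mT \<omega> - mB \<omega>)"
    obtain n :: nat where "\<bar>mB \<omega>\<bar> \<le> real n" using real_arch_simple by blast
    with H[rule_format, of n] show "real_cond_exp M F (\<lambda>\<omega>. Y \<omega> - mB \<omega>) \<omega> = mT \<omega> - mB \<omega>" by simp
  qed
  show ?thesis
    using step1 step3 unfolding F_def[symmetric] res_eq
    by eventually_elim (simp add: c_def mT_def mB_def)
qed



lemma D_cond_X:
  fixes M :: "'o measure" and SX :: "'x measure"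
    and X :: "'o \<Rightarrow> 'x" and A :: "'o \<Rightarrow> real"
    and mu0 mu1 pi mu0b mu1b :: "'x \<Rightarrow> real"
  assumes P: "prob_space M"
    and X_meas: "X \<in> measurable M SX"
    and A_meas: "A \<in> borel_measurable M" and A_bin: "\<forall>\<omega>\<in>space M. A \<omega> \<in> {0, 1}"
    and pi_meas: "pi \<in> borel_measurable SX"
    and pi_bd: "\<forall>x. 0 < pi x \<and> pi x < 1"
    and pi_true: "AE \<omega> in M. real_cond_exp M (vimage_algebra (space M) X SX) A \<omega> = pi (X \<omega>)"
    and mu0_meas: "mu0 \<in> borel_measurable SX" and mu1_meas: "mu1 \<in> borel_measurable SX"
    and mu0b_meas: "mu0b \<in> borel_measurable SX" and mu1b_meas: "mu1b \<in> borel_measurable SX"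
    and D_def: "D = (\<lambda>\<omega>. (A \<omega> - pi (X \<omega>)) / (pi (X \<omega>) * (1 - pi (X \<omega>))) *
       ((if A \<omega> = 1 then mu1 (X \<omega>) else mu0 (X \<omega>)) - (if A \<omega> = 1 then mu1b (X \<omega>) else mu0b (X \<omega>))))"
    and D_int: "integrable M D"
  shows "AE \<omega> in M. real_cond_exp M (vimage_algebra (space M) X SX) D \<omega>
     = (mu1 (X \<omega>) - mu0 (X \<omega>)) - (mu1b (X \<omega>) - mu0b (X \<omega>))"
proof -
  define F where "F = vimage_algebra (space M) X SX"
  interpret S: sigma_finite_subalgebra M F unfolding F_def by (rule sfs_vimage[OF P X_meas])
  interpret prob_space M by (rule P)
  note [measurable] = X_meas A_meas mu0_meas mu1_meas pi_meas mu0b_meas mu1b_meas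
  define d1 where "d1 x = (mu1 x - mu1b x) / pi x" for x
  define d0 where "d0 x = (mu0 x - mu0b x) / (1 - pi x)" for x
  have d1m[measurable]: "d1 \<in> borel_measurable SX" unfolding d1_def[abs_def] by measurable
  have d0m[measurable]: "d0 \<in> borel_measurable SX" unfolding d0_def[abs_def] by measurable
  have d1F[measurable]: "(\<lambda>\<omega>. d1 (X \<omega>)) \<in> borel_measurable F" unfolding F_def by (rule meas_vimage[OF X_meas d1m])
  have d0F[measurable]: "(\<lambda>\<omega>. d0 (X \<omega>)) \<in> borel_measurable F" unfolding F_def by (rule meas_vimage[OF X_meas d0m])
  have Dm[measurable]: "D \<in> borel_measurable M" unfolding D_def by measurable
  have Deq: "D \<omega> = d1 (X \<omega>) * A \<omega> - d0 (X \<omega>) * (1 - A \<omega>)" if "\<omega> \<in> space M" for \<omega>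
  proof -
    have p: "0 < pi (X \<omega>)" "pi (X \<omega>) < 1" using pi_bd by auto
    show ?thesis
    proof (cases "A \<omega> = 1")
      case True then show ?thesis using p by (simp add: D_def d1_def d0_def field_simps)
    next
      case False then have "A \<omega> = 0" using A_bin that by auto
      then show ?thesis using p by (simp add: D_def d1_def d0_def field_simps)
    qed
  qed
  have i1: "integrable M (\<lambda>\<omega>. d1 (X \<omega>) * A \<omega>)"
  proof (rule Bochner_Integration.integrable_bound[OF D_int], measurable, intro AE_I2)
    fix \<omega> assume "\<omega> \<in> space M"
    then show "norm (d1 (X \<omega>) * A \<omega>) \<le> norm (D \<omega>)"
      using Deq[of \<omega>] A_bin by auto
  qed
  have i0: "integrable M (\<lambda>\<omega>. d0 (X \<omega>) * (1 - A \<omega>))"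
  proof (rule Bochner_Integration.integrable_bound[OF D_int], measurable, intro AE_I2)
    fix \<omega> assume "\<omega> \<in> space M"
    then show "norm (d0 (X \<omega>) * (1 - A \<omega>)) \<le> norm (D \<omega>)"
      using Deq[of \<omega>] A_bin by auto
  qed
  have iA: "integrable M A"
  proof (rule Bochner_Integration.integrable_bound[OF integrable_const[of "1::real"]], measurable, intro AE_I2)
    fix \<omega> assume "\<omega> \<in> space M"
    then show "norm (A \<omega>) \<le> norm (1::real)" using A_bin by auto
  qed
  have i1c: "integrable M (\<lambda>\<omega>. 1::real)" by simp
  have e1: "AE \<omega> in M. real_cond_exp M F (\<lambda>\<omega>. d1 (X \<omega>) * A \<omega>) \<omega> = d1 (X \<omega>) * real_cond_exp M F A \<omega>"
    by (rule S.real_cond_exp_mult[OF d1F A_meas i1])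
  have 1: "(\<lambda>\<omega>. 1 - A \<omega>) \<in> borel_measurable M" by measurable
  have e0: "AE \<omega> in M. real_cond_exp M F (\<lambda>\<omega>. d0 (X \<omega>) * (1 - A \<omega>)) \<omega> = d0 (X \<omega>) * real_cond_exp M F (\<lambda>\<omega>. 1 - A \<omega>) \<omega>"
    by (rule S.real_cond_exp_mult[OF d0F 1 i0])
  have e2: "AE \<omega> in M. real_cond_exp M F (\<lambda>\<omega>. 1 - A \<omega>) \<omega> = real_cond_exp M F (\<lambda>\<omega>. 1) \<omega> - real_cond_exp M F A \<omega>"
    using S.real_cond_exp_diff[OF i1c iA] by simp
  have cF: "(\<lambda>\<omega>. 1::real) \<in> borel_measurable F" by simp
  have e3: "AE \<omega> in M. real_cond_exp M F (\<lambda>\<omega>. 1) \<omega> = 1"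
    by (rule S.real_cond_exp_F_meas[OF i1c cF])
  have m1: "(\<lambda>\<omega>. d1 (X \<omega>) * A \<omega> - d0 (X \<omega>) * (1 - A \<omega>)) \<in> borel_measurable M" by measurable
  have e4: "AE \<omega> in M. real_cond_exp M F D \<omega> = real_cond_exp M F (\<lambda>\<omega>. d1 (X \<omega>) * A \<omega> - d0 (X \<omega>) * (1 - A \<omega>)) \<omega>"
    by (rule S.real_cond_exp_cong[OF AE_I2[OF Deq] Dm m1])
  have e5: "AE \<omega> in M. real_cond_exp M F (\<lambda>\<omega>. d1 (X \<omega>) * A \<omega> - d0 (X \<omega>) * (1 - A \<omega>)) \<omega>
     = real_cond_exp M F (\<lambda>\<omega>. d1 (X \<omega>) * A \<omega>) \<omega> - real_cond_exp M F (\<lambda>\<omega>. d0 (X \<omega>) * (1 - A \<omega>)) \<omega>"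
    by (rule S.real_cond_exp_diff[OF i1 i0])
  have e6: "AE \<omega> in M. real_cond_exp M F A \<omega> = pi (X \<omega>)" using pi_true unfolding F_def .
  show ?thesis unfolding F_def[symmetric]
    using e0 e1 e2 e3 e4 e5 e6
  proof eventually_elim
    case (elim \<omega>)
    have p: "0 < pi (X \<omega>)" "pi (X \<omega>) < 1" using pi_bd by auto
    have "real_cond_exp M F D \<omega> = d1 (X \<omega>) * pi (X \<omega>) - d0 (X \<omega>) * (1 - pi (X \<omega>))"
      using elim by simp
    moreover have "d1 (X \<omega>) * pi (X \<omega>) = mu1 (X \<omega>) - mu1b (X \<omega>)" using p by (simp add: d1_def)
    moreover have "d0 (X \<omega>) * (1 - pi (X \<omega>)) = mu0 (X \<omega>) - mu0b (X \<omega>)" using p by (simp add: d0_def)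
    ultimately show ?case by simp
  qed
qed



lemma disint:
  fixes M :: "'o measure" and SW :: "'w measure" and V :: "'o \<Rightarrow> real \<times> 'w" and Q :: "'w measure"
    and f :: "real \<Rightarrow> 'w \<Rightarrow> real" and k :: "real \<times> 'w \<Rightarrow> real"
  assumes P: "prob_space M"
    and V_meas: "V \<in> measurable M (borel \<Otimes>\<^sub>M SW)"
    and Qsf: "sigma_finite_measure Q" and Qsets: "sets Q = sets SW"
    and f_meas: "(\<lambda>p. f (fst p) (snd p)) \<in> borel_measurable (borel \<Otimes>\<^sub>M SW)"
    and f_pos: "\<forall>t w. 0 < f t w"
    and f_true: "distr M (lborel \<Otimes>\<^sub>M Q) V = density (lborel \<Otimes>\<^sub>M Q) (\<lambda>p. ennreal (f (fst p) (snd p)))"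
    and k_meas: "k \<in> borel_measurable (borel \<Otimes>\<^sub>M SW)"
    and B: "B \<in> sets borel"
    and k_int: "integrable M (\<lambda>\<omega>. k (V \<omega>) * ((\<integral>w. f (fst (V \<omega>)) w \<partial>Q) / f (fst (V \<omega>)) (snd (V \<omega>))))"
  shows "integrable M (\<lambda>\<omega>. indicator B (fst (V \<omega>)) * (\<integral>w. k (fst (V \<omega>), w) \<partial>Q))"
    and "(\<integral>\<omega>. indicator B (fst (V \<omega>)) * (k (V \<omega>) * ((\<integral>w. f (fst (V \<omega>)) w \<partial>Q) / f (fst (V \<omega>)) (snd (V \<omega>)))) \<partial>M)
       = (\<integral>\<omega>. indicator B (fst (V \<omega>)) * (\<integral>w. k (fst (V \<omega>), w) \<partial>Q) \<partial>M)"
proof -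
  define N where "N = (lborel :: real measure) \<Otimes>\<^sub>M Q"
  interpret Q: sigma_finite_measure Q by (rule Qsf)
  interpret PS: pair_sigma_finite "lborel :: real measure" Q unfolding pair_sigma_finite_def using Qsf lborel.sigma_finite_measure_axioms by simp
  interpret prob_space M by (rule P)
  have setsN: "sets N = sets (borel \<Otimes>\<^sub>M SW)" unfolding N_def
    by (rule sets_pair_measure_cong[OF sets_lborel Qsets])
  have setsBQ: "sets (borel \<Otimes>\<^sub>M Q) = sets (borel \<Otimes>\<^sub>M SW)"
    by (rule sets_pair_measure_cong[OF refl Qsets])
  define fr where "fr p = f (fst p) (snd p)" for p
  define m where "m v = (\<integral>w. f v w \<partial>Q)" for v
  define K where "K v = (\<integral>w. k (v, w) \<partial>Q)" for v
  have frN[measurable]: "fr \<in> borel_measurable N"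
    unfolding measurable_cong_sets[OF setsN refl] fr_def[abs_def] by (rule f_meas)
  have kN[measurable]: "k \<in> borel_measurable N"
    unfolding measurable_cong_sets[OF setsN refl] by (rule k_meas)
  have VN[measurable]: "V \<in> measurable M N"
    unfolding measurable_cong_sets[OF refl setsN] by (rule V_meas)
  have fBQ: "case_prod f \<in> borel_measurable (borel \<Otimes>\<^sub>M Q)"
    unfolding measurable_cong_sets[OF setsBQ refl] using f_meas by (simp only: case_prod_beta')
  have kBQ: "case_prod (\<lambda>v w. k (v, w)) \<in> borel_measurable (borel \<Otimes>\<^sub>M Q)"
    unfolding measurable_cong_sets[OF setsBQ refl] using k_meas by (simp only: case_prod_eta)
  have mB[measurable]: "m \<in> borel_measurable borel"
    unfolding m_def[abs_def] by (rule Q.borel_measurable_lebesgue_integral[OF fBQ])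
  have KB[measurable]: "K \<in> borel_measurable borel"
    unfolding K_def[abs_def] by (rule Q.borel_measurable_lebesgue_integral[OF kBQ])
  have fstN[measurable]: "fst \<in> measurable N borel"
    unfolding N_def measurable_cong_sets[OF refl sets_lborel[symmetric]] by (rule measurable_fst)
  have transfer_int: "integral\<^sup>L M (\<lambda>\<omega>. G (V \<omega>)) = (\<integral>p. fr p * G p \<partial>N)"
    and transfer_intg: "integrable M (\<lambda>\<omega>. G (V \<omega>)) \<longleftrightarrow> integrable N (\<lambda>p. fr p * G p)"
    if G[measurable]: "G \<in> borel_measurable N" for G :: "real \<times> 'w \<Rightarrow> real"
  proof -
    have dd: "distr M N V = density N (\<lambda>p. ennreal (fr p))" using f_true unfolding N_def fr_def .
    have nn: "AE p in N. 0 \<le> fr p" by (rule AE_I2) (simp add: fr_def less_imp_le f_pos)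
    have "integral\<^sup>L M (\<lambda>\<omega>. G (V \<omega>)) = integral\<^sup>L (distr M N V) G"
      by (rule integral_distr[OF VN G, symmetric])
    also have "\<dots> = (\<integral>p. fr p * G p \<partial>N)" unfolding dd
      using integral_density[OF G frN nn] by (simp only: real_scaleR_def)
    finally show "integral\<^sup>L M (\<lambda>\<omega>. G (V \<omega>)) = (\<integral>p. fr p * G p \<partial>N)" .
    have "integrable M (\<lambda>\<omega>. G (V \<omega>)) \<longleftrightarrow> integrable (distr M N V) G"
      by (rule integrable_distr_eq[OF VN G, symmetric])
    also have "\<dots> \<longleftrightarrow> integrable N (\<lambda>p. fr p * G p)" unfolding dd
      using integrable_density[OF G frN nn] by (simp only: real_scaleR_def)
    finally show "integrable M (\<lambda>\<omega>. G (V \<omega>)) \<longleftrightarrow> integrable N (\<lambda>p. fr p * G p)" .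
  qed
  have fpos: "0 < fr p" for p using f_pos by (simp add: fr_def)
  have Bm[measurable]: "B \<in> sets borel" by (rule B)
  have G0m: "(\<lambda>p. k p * (m (fst p) / fr p)) \<in> borel_measurable N" by measurable
  have "integrable M (\<lambda>\<omega>. (\<lambda>p. k p * (m (fst p) / fr p)) (V \<omega>))"
    using k_int by (simp add: m_def fr_def)
  then have "integrable N (\<lambda>p. fr p * (k p * (m (fst p) / fr p)))"
    using transfer_intg[OF G0m] by simp
  moreover have "fr p * (k p * (m (fst p) / fr p)) = k p * m (fst p)" for p
    using fpos[of p] by (simp add: field_simps)
  ultimately have IkN: "integrable N (\<lambda>p. k p * m (fst p))" by simp
  have I1N: "integrable N (\<lambda>p. indicator B (fst p) * (k p * m (fst p)))"
  proof (rule Bochner_Integration.integrable_bound[OF IkN], measurable, intro AE_I2)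
    fix p :: "real \<times> 'w" show "norm (indicator B (fst p) * (k p * m (fst p))) \<le> norm (k p * m (fst p))"
      by (simp add: indicator_def)
  qed
  have frnn: "(\<lambda>p. ennreal (fr p)) \<in> borel_measurable N" by measurable
  have mass: "(\<integral>\<^sup>+ p. ennreal (fr p) \<partial>N) = 1"
  proof -
    have dd: "distr M N V = density N (\<lambda>p. ennreal (fr p))" using f_true unfolding N_def fr_def .
    have "(\<integral>\<^sup>+ p. ennreal (fr p) \<partial>N) = (\<integral>\<^sup>+ p. ennreal (fr p) * 1 \<partial>N)" by simp
    also have "\<dots> = integral\<^sup>N (density N (\<lambda>p. ennreal (fr p))) (\<lambda>_. 1)"
      by (rule nn_integral_density[symmetric]) (simp_all add: frnn)
    also have "\<dots> = integral\<^sup>N (distr M N V) (\<lambda>_. 1)" by (simp only: dd)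
    also have "\<dots> = (\<integral>\<^sup>+ _. 1 \<partial>M)" by (rule nn_integral_distr[OF VN]) simp
    also have "\<dots> = 1" using emeasure_space_1 by simp
    finally show ?thesis .
  qed
  have mass2: "(\<integral>\<^sup>+ v. (\<integral>\<^sup>+ w. ennreal (f v w) \<partial>Q) \<partial>lborel) = 1"
    using Q.nn_integral_fst[of "\<lambda>p. ennreal (fr p)" lborel] frnn mass
    unfolding N_def fr_def by simp
  have fnnm: "(\<lambda>v. \<integral>\<^sup>+ w. ennreal (f v w) \<partial>Q) \<in> borel_measurable lborel"
    using Q.borel_measurable_nn_integral_fst[of "\<lambda>p. ennreal (fr p)" lborel] frnn
    unfolding N_def fr_def by simp
  have AEfin: "AE v in lborel. (\<integral>\<^sup>+ w. ennreal (f v w) \<partial>Q) \<noteq> \<infinity>"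
    by (rule nn_integral_PInf_AE[OF fnnm]) (simp add: mass2)
  have IK: "integrable N (\<lambda>p. fr p * K (fst p))"
  proof (rule integrableI_bounded)
    show "(\<lambda>p. fr p * K (fst p)) \<in> borel_measurable N" by measurable
    have km: "(\<lambda>p. ennreal (norm (k p))) \<in> borel_measurable N" by measurable
    have "(\<integral>\<^sup>+ p. ennreal (norm (fr p * K (fst p))) \<partial>N)
        = (\<integral>\<^sup>+ p. ennreal (fr p) * ennreal \<bar>K (fst p)\<bar> \<partial>N)"
      by (rule nn_integral_cong) (simp add: abs_mult ennreal_mult less_imp_le[OF fpos])
    also have "\<dots> = (\<integral>\<^sup>+ v. \<integral>\<^sup>+ w. ennreal (f v w) * ennreal \<bar>K v\<bar> \<partial>Q \<partial>lborel)"
    proof -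
      have mm: "(\<lambda>p. ennreal (fr p) * ennreal \<bar>K (fst p)\<bar>) \<in> borel_measurable N" by measurable
      show ?thesis using Q.nn_integral_fst[OF mm[unfolded N_def]] by (simp add: fr_def N_def)
    qed
    also have "\<dots> = (\<integral>\<^sup>+ v. (\<integral>\<^sup>+ w. ennreal (f v w) \<partial>Q) * ennreal \<bar>K v\<bar> \<partial>lborel)"
    proof (rule nn_integral_cong)
      fix v :: real
      have "(\<lambda>w. ennreal (f v w)) \<in> borel_measurable Q"
        using measurable_Pair2[OF frnn[unfolded N_def], of v] by (simp add: fr_def)
      then show "(\<integral>\<^sup>+ w. ennreal (f v w) * ennreal \<bar>K v\<bar> \<partial>Q) = (\<integral>\<^sup>+ w. ennreal (f v w) \<partial>Q) * ennreal \<bar>K v\<bar>"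
        by (rule nn_integral_multc)
    qed
    also have "\<dots> \<le> (\<integral>\<^sup>+ v. ennreal (m v) * (\<integral>\<^sup>+ w. ennreal (norm (k (v, w))) \<partial>Q) \<partial>lborel)"
    proof (rule nn_integral_mono_AE)
      show "AE v in lborel. (\<integral>\<^sup>+ w. ennreal (f v w) \<partial>Q) * ennreal \<bar>K v\<bar>
          \<le> ennreal (m v) * (\<integral>\<^sup>+ w. ennreal (norm (k (v, w))) \<partial>Q)"
        using AEfin
      proof eventually_elim
        case (elim v)
        have fvm: "(\<lambda>w. f v w) \<in> borel_measurable Q"
          using measurable_Pair2[OF frN[unfolded N_def], of v] by (simp add: fr_def)
        have "integrable Q (\<lambda>w. f v w)"
        proof (rule integrableI_bounded[OF fvm])
          have "(\<integral>\<^sup>+ w. ennreal (norm (f v w)) \<partial>Q) = (\<integral>\<^sup>+ w. ennreal (f v w) \<partial>Q)"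
            by (rule nn_integral_cong) (simp add: less_imp_le f_pos)
          then show "(\<integral>\<^sup>+ w. ennreal (norm (f v w)) \<partial>Q) < \<infinity>" using elim by (simp add: less_top)
        qed
        then have e1: "(\<integral>\<^sup>+ w. ennreal (f v w) \<partial>Q) = ennreal (m v)"
          unfolding m_def by (rule nn_integral_eq_integral) (simp add: less_imp_le f_pos)
        have e2: "ennreal \<bar>K v\<bar> \<le> (\<integral>\<^sup>+ w. ennreal (norm (k (v, w))) \<partial>Q)"
        proof (cases "integrable Q (\<lambda>w. k (v, w))")
          case True
          then show ?thesis using integral_norm_bound_ennreal[OF True] by (simp add: K_def)
        next
          case False
          then show ?thesis by (simp add: K_def not_integrable_integral_eq)
        qed
        show ?case unfolding e1 using e2 by (simp add: mult.commute mult_left_mono)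
      qed
    qed
    also have "\<dots> = (\<integral>\<^sup>+ v. \<integral>\<^sup>+ w. ennreal (m v) * ennreal (norm (k (v, w))) \<partial>Q \<partial>lborel)"
    proof (rule nn_integral_cong)
      fix v :: real
      have "(\<lambda>w. ennreal (norm (k (v, w)))) \<in> borel_measurable Q"
        using measurable_Pair2[OF km[unfolded N_def], of v] by simp
      then show "ennreal (m v) * (\<integral>\<^sup>+ w. ennreal (norm (k (v, w))) \<partial>Q) = (\<integral>\<^sup>+ w. ennreal (m v) * ennreal (norm (k (v, w))) \<partial>Q)"
        by (rule nn_integral_cmult[symmetric])
    qed
    also have "\<dots> = (\<integral>\<^sup>+ p. ennreal (m (fst p)) * ennreal (norm (k p)) \<partial>N)"
    proof -
      have mm: "(\<lambda>p. ennreal (m (fst p)) * ennreal (norm (k p))) \<in> borel_measurable N" by measurable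
      show ?thesis using Q.nn_integral_fst[OF mm[unfolded N_def]] by (simp add: N_def)
    qed
    also have "\<dots> = (\<integral>\<^sup>+ p. ennreal (norm (k p * m (fst p))) \<partial>N)"
    proof (rule nn_integral_cong)
      fix p :: "real \<times> 'w"
      have "0 \<le> m (fst p)" unfolding m_def by (rule integral_nonneg_AE) (simp add: less_imp_le f_pos)
      then show "ennreal (m (fst p)) * ennreal (norm (k p)) = ennreal (norm (k p * m (fst p)))"
        by (simp add: abs_mult ennreal_mult mult.commute)
    qed
    also have "\<dots> < \<infinity>" using IkN by (simp add: integrable_iff_bounded)
    finally show "(\<integral>\<^sup>+ p. ennreal (norm (fr p * K (fst p))) \<partial>N) < \<infinity>" .
  qed
  have IKB: "integrable N (\<lambda>p. fr p * (indicator B (fst p) * K (fst p)))"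
  proof (rule Bochner_Integration.integrable_bound[OF IK], measurable, intro AE_I2)
    fix p :: "real \<times> 'w" show "norm (fr p * (indicator B (fst p) * K (fst p))) \<le> norm (fr p * K (fst p))"
      by (simp add: indicator_def)
  qed
  have Hm: "(\<lambda>p. indicator B (fst p) * K (fst p)) \<in> borel_measurable N" by measurable
  show "integrable M (\<lambda>\<omega>. indicator B (fst (V \<omega>)) * (\<integral>w. k (fst (V \<omega>), w) \<partial>Q))"
    using transfer_intg[OF Hm] IKB by (simp add: K_def)
  have G1m: "(\<lambda>p. indicator B (fst p) * (k p * (m (fst p) / fr p))) \<in> borel_measurable N" by measurable
  have "(\<integral>\<omega>. indicator B (fst (V \<omega>)) * (k (V \<omega>) * ((\<integral>w. f (fst (V \<omega>)) w \<partial>Q) / f (fst (V \<omega>)) (snd (V \<omega>)))) \<partial>M)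
     = (\<integral>\<omega>. (\<lambda>p. indicator B (fst p) * (k p * (m (fst p) / fr p))) (V \<omega>) \<partial>M)"
    by (simp add: m_def fr_def)
  also have "\<dots> = (\<integral>p. fr p * (indicator B (fst p) * (k p * (m (fst p) / fr p))) \<partial>N)"
    by (rule transfer_int[OF G1m])
  also have "\<dots> = (\<integral>p. indicator B (fst p) * (k p * m (fst p)) \<partial>N)"
  proof (rule Bochner_Integration.integral_cong[OF refl])
    fix p :: "real \<times> 'w" show "fr p * (indicator B (fst p) * (k p * (m (fst p) / fr p))) = indicator B (fst p) * (k p * m (fst p))"
      using fpos[of p] by (simp add: field_simps)
  qed
  also have "\<dots> = (\<integral>v. (\<integral>w. indicator B v * (k (v, w) * m v) \<partial>Q) \<partial>lborel)"
    using PS.integral_fst'[OF I1N[unfolded N_def]] by (simp add: N_def)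
  also have "\<dots> = (\<integral>v. indicator B v * m v * K v \<partial>lborel)"
  proof (rule Bochner_Integration.integral_cong[OF refl])
    fix v
    have "(\<integral>w. indicator B v * (k (v, w) * m v) \<partial>Q) = (\<integral>w. (indicator B v * m v) * k (v, w) \<partial>Q)"
      by (simp add: ac_simps)
    then show "(\<integral>w. indicator B v * (k (v, w) * m v) \<partial>Q) = indicator B v * m v * K v"
      by (simp add: K_def)
  qed
  also have "\<dots> = (\<integral>v. (\<integral>w. fr (v, w) * (indicator B v * K v) \<partial>Q) \<partial>lborel)"
  proof (rule Bochner_Integration.integral_cong[OF refl])
    fix v
    show "indicator B v * m v * K v = (\<integral>w. fr (v, w) * (indicator B v * K v) \<partial>Q)"
      by (simp add: fr_def m_def ac_simps)
  qed
  also have "\<dots> = (\<integral>p. fr p * (indicator B (fst p) * K (fst p)) \<partial>N)"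
    using PS.integral_fst'[OF IKB[unfolded N_def]] by (simp add: N_def)
  also have "\<dots> = (\<integral>\<omega>. (\<lambda>p. indicator B (fst p) * K (fst p)) (V \<omega>) \<partial>M)"
    by (rule transfer_int[OF Hm, symmetric])
  finally show "(\<integral>\<omega>. indicator B (fst (V \<omega>)) * (k (V \<omega>) * ((\<integral>w. f (fst (V \<omega>)) w \<partial>Q) / f (fst (V \<omega>)) (snd (V \<omega>)))) \<partial>M)
       = (\<integral>\<omega>. indicator B (fst (V \<omega>)) * (\<integral>w. k (fst (V \<omega>), w) \<partial>Q) \<partial>M)"
    by (simp add: K_def)
qed



theorem theorem2:
  fixes M :: "'o measure" and SX :: "'x measure" and SW :: "'w measure"
    and X :: "'o \<Rightarrow> 'x" and A Y :: "'o \<Rightarrow> real"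
    and vj :: "'x \<Rightarrow> real" and vm :: "'x \<Rightarrow> 'w"
    and pi mu0 mu1 pib mu0b mu1b :: "'x \<Rightarrow> real"
    and f fb :: "real \<Rightarrow> 'w \<Rightarrow> real"
  assumes P: "prob_space M"
    and X_meas: "X \<in> measurable M SX"
    and A_meas: "A \<in> borel_measurable M" and A_bin: "\<forall>\<omega>\<in>space M. A \<omega> \<in> {0, 1}"
    and Y_meas: "Y \<in> borel_measurable M" and Y_int: "integrable M Y"
    and vj_meas: "vj \<in> borel_measurable SX" and vm_meas: "vm \<in> measurable SX SW"
    (* true propensity score pi(X) = P(A = 1 | X) *)
    and pi_meas: "pi \<in> borel_measurable SX"
    and pi_bd: "\<forall>x\<in>space SX. 0 < pi x \<and> pi x < 1"
    and pi_true: "AE \<omega> in M. real_cond_exp M (vimage_algebra (space M) X SX) A \<omega> = pi (X \<omega>)"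
    (* true outcome regressions mu_a(X) = E[Y | A = a, X] *)
    and mu0_meas: "mu0 \<in> borel_measurable SX" and mu1_meas: "mu1 \<in> borel_measurable SX"
    and mu_true: "AE \<omega> in M.
       real_cond_exp M (vimage_algebra (space M) (\<lambda>\<omega>. (X \<omega>, A \<omega>)) (SX \<Otimes>\<^sub>M borel)) Y \<omega>
         = (if A \<omega> = 1 then mu1 (X \<omega>) else mu0 (X \<omega>))"
    (* true conditional density of V_j given V_{-j} *)
    and f_meas: "(\<lambda>p. f (fst p) (snd p)) \<in> borel_measurable (borel \<Otimes>\<^sub>M SW)"
    and f_nonneg: "\<forall>t w. 0 \<le> f t w"
    and f_true: "distr M (lborel \<Otimes>\<^sub>M marg_Vm M X SW vm) (\<lambda>\<omega>. (vj (X \<omega>), vm (X \<omega>)))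
       = density (lborel \<Otimes>\<^sub>M marg_Vm M X SW vm) (\<lambda>p. ennreal (f (fst p) (snd p)))"
    (* candidate nuisances *)
    and pib_meas: "pib \<in> borel_measurable SX"
    and mu0b_meas: "mu0b \<in> borel_measurable SX" and mu1b_meas: "mu1b \<in> borel_measurable SX"
    and fb_meas: "(\<lambda>p. fb (fst p) (snd p)) \<in> borel_measurable (borel \<Otimes>\<^sub>M SW)"
    and pib_bd: "\<forall>x. 0 < pib x \<and> pib x < 1"
    and fb_pos: "\<forall>t w. 0 < fb t w"
    (* integrability conditions (implicit in the paper) *)
    and int_tau: "integrable M (\<lambda>\<omega>. mu1 (X \<omega>) - mu0 (X \<omega>))"
    and int_taub: "integrable M (\<lambda>\<omega>. mu1b (X \<omega>) - mu0b (X \<omega>))"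
    and int_res: "integrable M (ipw_res X A Y pib mu0b mu1b)"
    and int_first: "integrable M (\<lambda>\<omega>.
         (ipw_res X A Y pib mu0b mu1b \<omega> + (mu1b (X \<omega>) - mu0b (X \<omega>))
            - cond_on_V M X SW vj vm (\<lambda>x. mu1b x - mu0b x) (vj (X \<omega>), vm (X \<omega>)))
         * ((\<integral>w. fb (vj (X \<omega>)) w \<partial>marg_Vm M X SW vm) / fb (vj (X \<omega>)) (vm (X \<omega>))))"
    and int_last: "integrable M (\<lambda>\<omega>.
         \<integral>w. cond_on_V M X SW vj vm (\<lambda>x. mu1b x - mu0b x) (vj (X \<omega>), w) \<partial>marg_Vm M X SW vm)"
    and int_sec_b: "AE \<omega> in M. integrable (marg_Vm M X SW vm)
         (\<lambda>w. cond_on_V M X SW vj vm (\<lambda>x. mu1b x - mu0b x) (vj (X \<omega>), w))"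
    and int_sec: "AE \<omega> in M. integrable (marg_Vm M X SW vm)
         (\<lambda>w. cond_on_V M X SW vj vm (\<lambda>x. mu1 x - mu0 x) (vj (X \<omega>), w))"
    (* double robustness condition *)
    and DR: "(mu0b = mu0 \<and> mu1b = mu1) \<or> (pib = pi \<and> fb = f)"
  shows "AE \<omega> in M.
     real_cond_exp M (vimage_algebra (space M) (\<lambda>\<omega>. vj (X \<omega>)) borel)
       (phi_pd M X A Y SW vj vm pib mu0b mu1b fb) \<omega>
     = theta_pd M X SW vj vm mu0 mu1 (vj (X \<omega>))"
proof -
  interpret prob_space M by (rule P)
  note [measurable] = X_meas A_meas Y_meas vj_meas vm_meas pi_meas mu0_meas mu1_meas
    pib_meas mu0b_meas mu1b_meas
  define Q where "Q = marg_Vm M X SW vm"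
  define V where "V = (\<lambda>\<omega>. (vj (X \<omega>), vm (X \<omega>)))"
  define Vj where "Vj = (\<lambda>\<omega>. vj (X \<omega>))"
  define FV where "FV = vimage_algebra (space M) V (borel \<Otimes>\<^sub>M SW)"
  define FJ where "FJ = vimage_algebra (space M) Vj borel"
  define FX where "FX = vimage_algebra (space M) X SX"
  define FXA where "FXA = vimage_algebra (space M) (\<lambda>\<omega>. (X \<omega>, A \<omega>)) (SX \<Otimes>\<^sub>M borel)"
  define h where "h = cond_on_V M X SW vj vm (\<lambda>x. mu1 x - mu0 x)"
  define hb where "hb = cond_on_V M X SW vj vm (\<lambda>x. mu1b x - mu0b x)"
  define res where "res = ipw_res X A Y pib mu0b mu1b"
  define T1 where "T1 \<omega> = res \<omega> + (mu1b (X \<omega>) - mu0b (X \<omega>)) - hb (V \<omega>)" for \<omega>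
  define mf where "mf v = (\<integral>w. fb v w \<partial>Q)" for v
  define Wf where "Wf p = mf (fst p) / fb (fst p) (snd p)" for p
  define Lf where "Lf v = (\<integral>w. hb (v, w) \<partial>Q)" for v
  define thf where "thf v = (\<integral>w. h (v, w) \<partial>Q)" for v
  define phi where "phi = phi_pd M X A Y SW vj vm pib mu0b mu1b fb"
  have VM[measurable]: "V \<in> measurable M (borel \<Otimes>\<^sub>M SW)" unfolding V_def by measurable
  have VjM[measurable]: "Vj \<in> borel_measurable M" unfolding Vj_def by measurable
  have UM: "(\<lambda>\<omega>. (X \<omega>, A \<omega>)) \<in> measurable M (SX \<Otimes>\<^sub>M borel)" by measurable
  interpret SV: sigma_finite_subalgebra M FV unfolding FV_def by (rule sfs_vimage[OF P VM])
  interpret SJ: sigma_finite_subalgebra M FJ unfolding FJ_def by (rule sfs_vimage[OF P VjM])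
  have Qprob: "prob_space Q" unfolding Q_def marg_Vm_def by (rule prob_space_distr) measurable
  have Qsf: "sigma_finite_measure Q" using Qprob by (simp add: prob_space_imp_sigma_finite)
  interpret Q: sigma_finite_measure Q by (rule Qsf)
  have Qsets: "sets Q = sets SW" unfolding Q_def marg_Vm_def by simp
  have setsBQ: "sets (borel \<Otimes>\<^sub>M Q) = sets (borel \<Otimes>\<^sub>M SW)"
    by (rule sets_pair_measure_cong[OF refl Qsets])
  have hm[measurable]: "h \<in> borel_measurable (borel \<Otimes>\<^sub>M SW)"
    unfolding h_def cond_on_V_def by (rule cond_fn_spec(1)[OF P VM[unfolded V_def]])
  have hbm[measurable]: "hb \<in> borel_measurable (borel \<Otimes>\<^sub>M SW)"
    unfolding hb_def cond_on_V_def by (rule cond_fn_spec(1)[OF P VM[unfolded V_def]])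
  have hAE: "AE \<omega> in M. real_cond_exp M FV (\<lambda>\<omega>. mu1 (X \<omega>) - mu0 (X \<omega>)) \<omega> = h (V \<omega>)"
    unfolding h_def cond_on_V_def FV_def V_def by (rule cond_fn_spec(2)[OF P VM[unfolded V_def]])
  have hbAE: "AE \<omega> in M. real_cond_exp M FV (\<lambda>\<omega>. mu1b (X \<omega>) - mu0b (X \<omega>)) \<omega> = hb (V \<omega>)"
    unfolding hb_def cond_on_V_def FV_def V_def by (rule cond_fn_spec(2)[OF P VM[unfolded V_def]])
  have fbBQ: "case_prod fb \<in> borel_measurable (borel \<Otimes>\<^sub>M Q)"
    unfolding measurable_cong_sets[OF setsBQ refl] using fb_meas by (simp only: case_prod_beta')
  have hBQ: "case_prod (\<lambda>v w. h (v, w)) \<in> borel_measurable (borel \<Otimes>\<^sub>M Q)"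
    unfolding measurable_cong_sets[OF setsBQ refl] using hm by (simp only: case_prod_eta)
  have hbBQ: "case_prod (\<lambda>v w. hb (v, w)) \<in> borel_measurable (borel \<Otimes>\<^sub>M Q)"
    unfolding measurable_cong_sets[OF setsBQ refl] using hbm by (simp only: case_prod_eta)
  have mfm[measurable]: "mf \<in> borel_measurable borel"
    unfolding mf_def[abs_def] by (rule Q.borel_measurable_lebesgue_integral[OF fbBQ])
  have Lfm[measurable]: "Lf \<in> borel_measurable borel"
    unfolding Lf_def[abs_def] by (rule Q.borel_measurable_lebesgue_integral[OF hbBQ])
  have thfm[measurable]: "thf \<in> borel_measurable borel"
    unfolding thf_def[abs_def] by (rule Q.borel_measurable_lebesgue_integral[OF hBQ])
  have fbm[measurable]: "(\<lambda>p. fb (fst p) (snd p)) \<in> borel_measurable (borel \<Otimes>\<^sub>M SW)" by (rule fb_meas)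
  have Wfm[measurable]: "Wf \<in> borel_measurable (borel \<Otimes>\<^sub>M SW)" unfolding Wf_def[abs_def] by measurable
  have resm[measurable]: "res \<in> borel_measurable M" using int_res unfolding res_def by simp
  have T1m[measurable]: "T1 \<in> borel_measurable M" unfolding T1_def[abs_def] V_def by measurable
  have phi_eq: "phi \<omega> = T1 \<omega> * Wf (V \<omega>) + Lf (Vj \<omega>)" for \<omega>
    by (simp add: phi_def phi_pd_def Let_def T1_def Wf_def mf_def Lf_def V_def Vj_def Q_def res_def hb_def)
  have th_eq: "theta_pd M X SW vj vm mu0 mu1 (Vj \<omega>) = thf (Vj \<omega>)" for \<omega>
    by (simp add: theta_pd_def thf_def h_def Q_def)
  have int1: "integrable M (\<lambda>\<omega>. T1 \<omega> * Wf (V \<omega>))"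
    using int_first by (simp add: T1_def Wf_def mf_def V_def Q_def res_def hb_def)
  have intL: "integrable M (\<lambda>\<omega>. Lf (Vj \<omega>))"
    using int_last by (simp add: Lf_def Vj_def Q_def hb_def)
  have Vj_fst: "Vj \<omega> = fst (V \<omega>)" for \<omega> by (simp add: V_def Vj_def)
  have hbVm[measurable]: "(\<lambda>\<omega>. hb (V \<omega>)) \<in> borel_measurable M" by measurable
  have hbVF: "(\<lambda>\<omega>. hb (V \<omega>)) \<in> borel_measurable FV" unfolding FV_def by (rule meas_vimage[OF VM hbm])
  have int_hbV: "integrable M (\<lambda>\<omega>. hb (V \<omega>))"
    by (rule integrable_cong_AE_imp[OF SV.real_cond_exp_int(1)[OF int_taub] hbVm hbAE])
  have int_rt: "integrable M (\<lambda>\<omega>. res \<omega> + (mu1b (X \<omega>) - mu0b (X \<omega>)))"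
    using int_res int_taub unfolding res_def by (rule Bochner_Integration.integrable_add)
  have c1: "AE \<omega> in M. real_cond_exp M FV (\<lambda>\<omega>. res \<omega> + (mu1b (X \<omega>) - mu0b (X \<omega>)) - hb (V \<omega>)) \<omega>
     = real_cond_exp M FV (\<lambda>\<omega>. res \<omega> + (mu1b (X \<omega>) - mu0b (X \<omega>))) \<omega> - real_cond_exp M FV (\<lambda>\<omega>. hb (V \<omega>)) \<omega>"
    by (rule SV.real_cond_exp_diff[OF int_rt int_hbV])
  have c2: "AE \<omega> in M. real_cond_exp M FV (\<lambda>\<omega>. res \<omega> + (mu1b (X \<omega>) - mu0b (X \<omega>))) \<omega>
     = real_cond_exp M FV res \<omega> + real_cond_exp M FV (\<lambda>\<omega>. mu1b (X \<omega>) - mu0b (X \<omega>)) \<omega>"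
    using SV.real_cond_exp_add[OF int_res[folded res_def] int_taub] by simp
  have c3: "AE \<omega> in M. real_cond_exp M FV (\<lambda>\<omega>. hb (V \<omega>)) \<omega> = hb (V \<omega>)"
    by (rule SV.real_cond_exp_F_meas[OF int_hbV hbVF])
  have cT1: "AE \<omega> in M. real_cond_exp M FV T1 \<omega> = real_cond_exp M FV res \<omega>"
    using c1 c2 c3 hbAE unfolding T1_def[abs_def] by eventually_elim simp
  have split: "(\<integral>\<omega>. indicator B (Vj \<omega>) * phi \<omega> \<partial>M)
      = (\<integral>\<omega>. (indicator B (Vj \<omega>) * Wf (V \<omega>)) * real_cond_exp M FV res \<omega> \<partial>M)
        + (\<integral>\<omega>. indicator B (Vj \<omega>) * Lf (Vj \<omega>) \<partial>M)"
    and int_split: "integrable M (\<lambda>\<omega>. (indicator B (Vj \<omega>) * Wf (V \<omega>)) * real_cond_exp M FV res \<omega>)"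
    if B[measurable]: "B \<in> sets borel" for B
  proof -
    have iA: "integrable M (\<lambda>\<omega>. indicator B (Vj \<omega>) * (T1 \<omega> * Wf (V \<omega>)))"
    proof (rule Bochner_Integration.integrable_bound[OF int1], measurable, intro AE_I2)
      fix \<omega> show "norm (indicator B (Vj \<omega>) * (T1 \<omega> * Wf (V \<omega>))) \<le> norm (T1 \<omega> * Wf (V \<omega>))"
        by (simp add: indicator_def)
    qed
    have iB: "integrable M (\<lambda>\<omega>. indicator B (Vj \<omega>) * Lf (Vj \<omega>))"
    proof (rule Bochner_Integration.integrable_bound[OF intL], measurable, intro AE_I2)
      fix \<omega> show "norm (indicator B (Vj \<omega>) * Lf (Vj \<omega>)) \<le> norm (Lf (Vj \<omega>))"
        by (simp add: indicator_def)
    qed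
    have "(\<lambda>\<omega>. (\<lambda>p. indicator B (fst p) * Wf p) (V \<omega>)) \<in> borel_measurable FV"
      unfolding FV_def by (rule meas_vimage[OF VM]) measurable
    then have fF: "(\<lambda>\<omega>. indicator B (Vj \<omega>) * Wf (V \<omega>)) \<in> borel_measurable FV"
      by (simp add: Vj_fst)
    have iA': "integrable M (\<lambda>\<omega>. (indicator B (Vj \<omega>) * Wf (V \<omega>)) * T1 \<omega>)"
      using iA by (simp add: ac_simps)
    have "(\<integral>\<omega>. indicator B (Vj \<omega>) * phi \<omega> \<partial>M)
        = (\<integral>\<omega>. indicator B (Vj \<omega>) * (T1 \<omega> * Wf (V \<omega>)) + indicator B (Vj \<omega>) * Lf (Vj \<omega>) \<partial>M)"
      by (simp add: phi_eq distrib_left)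
    also have "\<dots> = (\<integral>\<omega>. indicator B (Vj \<omega>) * (T1 \<omega> * Wf (V \<omega>)) \<partial>M) + (\<integral>\<omega>. indicator B (Vj \<omega>) * Lf (Vj \<omega>) \<partial>M)"
      by (rule Bochner_Integration.integral_add[OF iA iB])
    also have "(\<integral>\<omega>. indicator B (Vj \<omega>) * (T1 \<omega> * Wf (V \<omega>)) \<partial>M) = (\<integral>\<omega>. (indicator B (Vj \<omega>) * Wf (V \<omega>)) * T1 \<omega> \<partial>M)"
      by (simp add: ac_simps)
    also have "\<dots> = (\<integral>\<omega>. (indicator B (Vj \<omega>) * Wf (V \<omega>)) * real_cond_exp M FV T1 \<omega> \<partial>M)"
      by (rule SV.real_cond_exp_intg(2)[OF iA' fF T1m, symmetric])
    also have "\<dots> = (\<integral>\<omega>. (indicator B (Vj \<omega>) * Wf (V \<omega>)) * real_cond_exp M FV res \<omega> \<partial>M)"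
      by (rule integral_cong_AE) (use cT1 in \<open>measurable, auto\<close>)
    finally show "(\<integral>\<omega>. indicator B (Vj \<omega>) * phi \<omega> \<partial>M)
      = (\<integral>\<omega>. (indicator B (Vj \<omega>) * Wf (V \<omega>)) * real_cond_exp M FV res \<omega> \<partial>M)
        + (\<integral>\<omega>. indicator B (Vj \<omega>) * Lf (Vj \<omega>) \<partial>M)" .
    have "integrable M (\<lambda>\<omega>. (indicator B (Vj \<omega>) * Wf (V \<omega>)) * real_cond_exp M FV T1 \<omega>)"
      by (rule SV.real_cond_exp_intg(1)[OF iA' fF T1m])
    then show "integrable M (\<lambda>\<omega>. (indicator B (Vj \<omega>) * Wf (V \<omega>)) * real_cond_exp M FV res \<omega>)"
      by (rule integrable_cong_AE_imp) (use cT1 in \<open>measurable, auto\<close>)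
  qed
  have subXA: "subalgebra M FXA" unfolding FXA_def by (rule subalg_vimage[OF UM])
  have subX: "subalgebra M FX" unfolding FX_def by (rule subalg_vimage[OF X_meas])
  have subXAV: "subalgebra FXA FV" unfolding FXA_def FV_def
  proof (rule subalg_vimage2[OF UM, where g="\<lambda>p. (vj (fst p), vm (fst p))"])
    show "(\<lambda>p. (vj (fst p), vm (fst p))) \<in> measurable (SX \<Otimes>\<^sub>M borel) (borel \<Otimes>\<^sub>M SW)" by measurable
  qed (simp add: V_def)
  have subXV: "subalgebra FX FV" unfolding FX_def FV_def
  proof (rule subalg_vimage2[OF X_meas, where g="\<lambda>x. (vj x, vm x)"])
    show "(\<lambda>x. (vj x, vm x)) \<in> measurable SX (borel \<Otimes>\<^sub>M SW)" by measurable
  qed (simp add: V_def)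
  interpret SXA: sigma_finite_subalgebra M FXA unfolding FXA_def by (rule sfs_vimage[OF P UM])
  define D where "D = (\<lambda>\<omega>. (A \<omega> - pib (X \<omega>)) / (pib (X \<omega>) * (1 - pib (X \<omega>))) *
       ((if A \<omega> = 1 then mu1 (X \<omega>) else mu0 (X \<omega>)) - (if A \<omega> = 1 then mu1b (X \<omega>) else mu0b (X \<omega>))))"
  have Dm[measurable]: "D \<in> borel_measurable M" unfolding D_def by measurable
  have resXA: "AE \<omega> in M. real_cond_exp M FXA res \<omega> = D \<omega>"
    using res_cond_XA[OF P X_meas A_meas Y_meas Y_int mu0_meas mu1_meas pib_meas mu0b_meas mu1b_meas mu_true int_res]
    unfolding FXA_def res_def D_def .
  have Dint: "integrable M D"
    by (rule integrable_cong_AE_imp[OF SXA.real_cond_exp_int(1)[OF int_res[folded res_def]] Dm resXA])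
  have nestXA: "AE \<omega> in M. real_cond_exp M FV (real_cond_exp M FXA res) \<omega> = real_cond_exp M FV res \<omega>"
    by (rule SV.real_cond_exp_nested_subalg[OF subXA subXAV int_res[folded res_def]])
  have congD: "AE \<omega> in M. real_cond_exp M FV (real_cond_exp M FXA res) \<omega> = real_cond_exp M FV D \<omega>"
    by (rule SV.real_cond_exp_cong[OF resXA borel_measurable_cond_exp2 Dm])
  have resFV: "AE \<omega> in M. real_cond_exp M FV res \<omega> = real_cond_exp M FV D \<omega>"
    using nestXA congD by eventually_elim simp
  have intphi: "integrable M phi"
  proof -
    have "phi = (\<lambda>\<omega>. T1 \<omega> * Wf (V \<omega>) + Lf (Vj \<omega>))" by (simp add: fun_eq_iff phi_eq)
    then show ?thesis using Bochner_Integration.integrable_add[OF int1 intL] by simp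
  qed
  have main: "integrable M (\<lambda>\<omega>. thf (Vj \<omega>)) \<and>
     (\<forall>B\<in>sets borel. (\<integral>\<omega>. indicator B (Vj \<omega>) * phi \<omega> \<partial>M) = (\<integral>\<omega>. indicator B (Vj \<omega>) * thf (Vj \<omega>) \<partial>M))"
    using DR
  proof (elim disjE conjE)
    assume e0: "mu0b = mu0" and e1: "mu1b = mu1"
    have D0: "D = (\<lambda>_. 0)" by (simp add: D_def e0 e1 fun_eq_iff)
    have z: "AE \<omega> in M. real_cond_exp M FV (\<lambda>_. 0) \<omega> = 0"
      by (rule SV.real_cond_exp_F_meas) simp_all
    have res0: "AE \<omega> in M. real_cond_exp M FV res \<omega> = 0"
      using resFV z unfolding D0 by eventually_elim simp
    have thL: "thf = Lf" by (simp add: fun_eq_iff thf_def Lf_def h_def hb_def e0 e1)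
    show ?thesis
    proof (intro conjI ballI)
      show "integrable M (\<lambda>\<omega>. thf (Vj \<omega>))" using intL by (simp add: thL)
      fix B :: "real set" assume B[measurable]: "B \<in> sets borel"
      have "(\<integral>\<omega>. (indicator B (Vj \<omega>) * Wf (V \<omega>)) * real_cond_exp M FV res \<omega> \<partial>M) = (\<integral>\<omega>. 0 \<partial>M)"
        by (rule integral_cong_AE) (use res0 in \<open>measurable, auto\<close>)
      then show "(\<integral>\<omega>. indicator B (Vj \<omega>) * phi \<omega> \<partial>M) = (\<integral>\<omega>. indicator B (Vj \<omega>) * thf (Vj \<omega>) \<partial>M)"
        using split[OF B] by (simp add: thL)
    qed
  next
    assume e0: "pib = pi" and e1: "fb = f"
    have pi_bd': "\<forall>x. 0 < pi x \<and> pi x < 1" using pib_bd by (simp add: e0)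
    have Ddef': "D = (\<lambda>\<omega>. (A \<omega> - pi (X \<omega>)) / (pi (X \<omega>) * (1 - pi (X \<omega>))) *
       ((if A \<omega> = 1 then mu1 (X \<omega>) else mu0 (X \<omega>)) - (if A \<omega> = 1 then mu1b (X \<omega>) else mu0b (X \<omega>))))"
      by (simp add: D_def e0)
    have DX: "AE \<omega> in M. real_cond_exp M FX D \<omega> = (mu1 (X \<omega>) - mu0 (X \<omega>)) - (mu1b (X \<omega>) - mu0b (X \<omega>))"
      using D_cond_X[OF P X_meas A_meas A_bin pi_meas pi_bd' pi_true mu0_meas mu1_meas mu0b_meas mu1b_meas Ddef' Dint]
      unfolding FX_def .
    have nestX: "AE \<omega> in M. real_cond_exp M FV (real_cond_exp M FX D) \<omega> = real_cond_exp M FV D \<omega>"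
      by (rule SV.real_cond_exp_nested_subalg[OF subX subXV Dint])
    have tm: "(\<lambda>\<omega>. (mu1 (X \<omega>) - mu0 (X \<omega>)) - (mu1b (X \<omega>) - mu0b (X \<omega>))) \<in> borel_measurable M" by measurable
    have congX: "AE \<omega> in M. real_cond_exp M FV (real_cond_exp M FX D) \<omega>
        = real_cond_exp M FV (\<lambda>\<omega>. (mu1 (X \<omega>) - mu0 (X \<omega>)) - (mu1b (X \<omega>) - mu0b (X \<omega>))) \<omega>"
      by (rule SV.real_cond_exp_cong[OF DX borel_measurable_cond_exp2 tm])
    have diffT: "AE \<omega> in M. real_cond_exp M FV (\<lambda>\<omega>. (mu1 (X \<omega>) - mu0 (X \<omega>)) - (mu1b (X \<omega>) - mu0b (X \<omega>))) \<omega>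
        = real_cond_exp M FV (\<lambda>\<omega>. mu1 (X \<omega>) - mu0 (X \<omega>)) \<omega> - real_cond_exp M FV (\<lambda>\<omega>. mu1b (X \<omega>) - mu0b (X \<omega>)) \<omega>"
      by (rule SV.real_cond_exp_diff[OF int_tau int_taub])
    have resK: "AE \<omega> in M. real_cond_exp M FV res \<omega> = h (V \<omega>) - hb (V \<omega>)"
      using resFV nestX congX diffT hAE hbAE by eventually_elim simp
    define k where "k p = h p - hb p" for p
    have km: "k \<in> borel_measurable (borel \<Otimes>\<^sub>M SW)" unfolding k_def[abs_def] by measurable
    have fpos: "\<forall>t w. 0 < f t w" using fb_pos by (simp add: e1)
    have f_true': "distr M (lborel \<Otimes>\<^sub>M Q) V = density (lborel \<Otimes>\<^sub>M Q) (\<lambda>p. ennreal (f (fst p) (snd p)))"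
      using f_true unfolding Q_def V_def .
    have Wk: "Wf (V \<omega>) = (\<integral>w. f (fst (V \<omega>)) w \<partial>Q) / f (fst (V \<omega>)) (snd (V \<omega>))" for \<omega>
      by (simp add: Wf_def mf_def e1)
    have AEk: "AE \<omega> in M. (indicator B (Vj \<omega>) * Wf (V \<omega>)) * real_cond_exp M FV res \<omega>
        = indicator B (fst (V \<omega>)) * (k (V \<omega>) * ((\<integral>w. f (fst (V \<omega>)) w \<partial>Q) / f (fst (V \<omega>)) (snd (V \<omega>))))" for B
      using resK by eventually_elim (simp add: Wk k_def Vj_fst)
    have kint: "integrable M (\<lambda>\<omega>. k (V \<omega>) * ((\<integral>w. f (fst (V \<omega>)) w \<partial>Q) / f (fst (V \<omega>)) (snd (V \<omega>))))"
    proof -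
      have "integrable M (\<lambda>\<omega>. indicator UNIV (fst (V \<omega>)) * (k (V \<omega>) * ((\<integral>w. f (fst (V \<omega>)) w \<partial>Q) / f (fst (V \<omega>)) (snd (V \<omega>)))))"
        by (rule integrable_cong_AE_imp[OF int_split[of UNIV] _ AEk[of UNIV]]) (simp_all add: k_def Wk[symmetric])
      then show ?thesis by simp
    qed
    have kBQ: "case_prod (\<lambda>v w. k (v, w)) \<in> borel_measurable (borel \<Otimes>\<^sub>M Q)"
      unfolding measurable_cong_sets[OF setsBQ refl] using km by (simp only: case_prod_eta)
    have Kfm: "(\<lambda>v. \<integral>w. k (v, w) \<partial>Q) \<in> borel_measurable borel"
      by (rule Q.borel_measurable_lebesgue_integral[OF kBQ])
    have KVm[measurable]: "(\<lambda>\<omega>. \<integral>w. k (fst (V \<omega>), w) \<partial>Q) \<in> borel_measurable M"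
      using measurable_compose[OF _ Kfm, of "\<lambda>\<omega>. fst (V \<omega>)" M] by simp
    note DI = disint[OF P VM Qsf Qsets f_meas fpos f_true' km _ kint]
    have AEint: "AE \<omega> in M. (\<integral>w. k (fst (V \<omega>), w) \<partial>Q) = thf (Vj \<omega>) - Lf (Vj \<omega>)"
      using int_sec int_sec_b
    proof eventually_elim
      case (elim \<omega>)
      then show ?case
        by (simp add: k_def thf_def Lf_def Vj_fst Bochner_Integration.integral_diff h_def hb_def Q_def V_def)
    qed
    have key: "(\<integral>\<omega>. (indicator B (Vj \<omega>) * Wf (V \<omega>)) * real_cond_exp M FV res \<omega> \<partial>M)
        = (\<integral>\<omega>. indicator B (Vj \<omega>) * (thf (Vj \<omega>) - Lf (Vj \<omega>)) \<partial>M)"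
      and keyint: "integrable M (\<lambda>\<omega>. indicator B (Vj \<omega>) * (thf (Vj \<omega>) - Lf (Vj \<omega>)))"
      if B[measurable]: "B \<in> sets borel" for B
    proof -
      have "(\<integral>\<omega>. (indicator B (Vj \<omega>) * Wf (V \<omega>)) * real_cond_exp M FV res \<omega> \<partial>M)
          = (\<integral>\<omega>. indicator B (fst (V \<omega>)) * (k (V \<omega>) * ((\<integral>w. f (fst (V \<omega>)) w \<partial>Q) / f (fst (V \<omega>)) (snd (V \<omega>)))) \<partial>M)"
        by (rule integral_cong_AE[OF _ _ AEk]) (simp_all add: k_def Wk[symmetric])
      also have "\<dots> = (\<integral>\<omega>. indicator B (fst (V \<omega>)) * (\<integral>w. k (fst (V \<omega>), w) \<partial>Q) \<partial>M)"
        by (rule DI(2)[OF B])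
      also have "\<dots> = (\<integral>\<omega>. indicator B (Vj \<omega>) * (thf (Vj \<omega>) - Lf (Vj \<omega>)) \<partial>M)"
      proof (rule integral_cong_AE)
        show "(\<lambda>\<omega>. indicator B (fst (V \<omega>)) * (\<integral>w. k (fst (V \<omega>), w) \<partial>Q)) \<in> borel_measurable M"
          using KVm by measurable
        show "(\<lambda>\<omega>. indicator B (Vj \<omega>) * (thf (Vj \<omega>) - Lf (Vj \<omega>))) \<in> borel_measurable M" by measurable
        show "AE \<omega> in M. indicator B (fst (V \<omega>)) * (\<integral>w. k (fst (V \<omega>), w) \<partial>Q) = indicator B (Vj \<omega>) * (thf (Vj \<omega>) - Lf (Vj \<omega>))"
          using AEint by eventually_elim (simp add: Vj_fst)
      qed
      finally show "(\<integral>\<omega>. (indicator B (Vj \<omega>) * Wf (V \<omega>)) * real_cond_exp M FV res \<omega> \<partial>M)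
        = (\<integral>\<omega>. indicator B (Vj \<omega>) * (thf (Vj \<omega>) - Lf (Vj \<omega>)) \<partial>M)" .
      show "integrable M (\<lambda>\<omega>. indicator B (Vj \<omega>) * (thf (Vj \<omega>) - Lf (Vj \<omega>)))"
      proof (rule integrable_cong_AE_imp[OF DI(1)[OF B]])
        show "(\<lambda>\<omega>. indicator B (Vj \<omega>) * (thf (Vj \<omega>) - Lf (Vj \<omega>))) \<in> borel_measurable M" by measurable
        show "AE \<omega> in M. indicator B (fst (V \<omega>)) * (\<integral>w. k (fst (V \<omega>), w) \<partial>Q) = indicator B (Vj \<omega>) * (thf (Vj \<omega>) - Lf (Vj \<omega>))"
          using AEint by eventually_elim (simp add: Vj_fst)
      qed
    qed
    show ?thesis
    proof (intro conjI ballI)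
      have "integrable M (\<lambda>\<omega>. indicator UNIV (Vj \<omega>) * (thf (Vj \<omega>) - Lf (Vj \<omega>)))" by (rule keyint) simp
      then have "integrable M (\<lambda>\<omega>. (thf (Vj \<omega>) - Lf (Vj \<omega>)) + Lf (Vj \<omega>))"
        using intL by (intro Bochner_Integration.integrable_add) simp_all
      then show "integrable M (\<lambda>\<omega>. thf (Vj \<omega>))" by simp
      fix B :: "real set" assume B[measurable]: "B \<in> sets borel"
      have iL: "integrable M (\<lambda>\<omega>. indicator B (Vj \<omega>) * Lf (Vj \<omega>))"
      proof (rule Bochner_Integration.integrable_bound[OF intL], measurable, intro AE_I2)
        fix \<omega> show "norm (indicator B (Vj \<omega>) * Lf (Vj \<omega>)) \<le> norm (Lf (Vj \<omega>))"
          by (simp add: indicator_def)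
      qed
      have "(\<integral>\<omega>. indicator B (Vj \<omega>) * phi \<omega> \<partial>M)
          = (\<integral>\<omega>. indicator B (Vj \<omega>) * (thf (Vj \<omega>) - Lf (Vj \<omega>)) \<partial>M) + (\<integral>\<omega>. indicator B (Vj \<omega>) * Lf (Vj \<omega>) \<partial>M)"
        using split[OF B] key[OF B] by simp
      also have "\<dots> = (\<integral>\<omega>. indicator B (Vj \<omega>) * (thf (Vj \<omega>) - Lf (Vj \<omega>)) + indicator B (Vj \<omega>) * Lf (Vj \<omega>) \<partial>M)"
        by (rule Bochner_Integration.integral_add[OF keyint[OF B] iL, symmetric])
      also have "\<dots> = (\<integral>\<omega>. indicator B (Vj \<omega>) * thf (Vj \<omega>) \<partial>M)"
        by (simp add: algebra_simps)
      finally show "(\<integral>\<omega>. indicator B (Vj \<omega>) * phi \<omega> \<partial>M) = (\<integral>\<omega>. indicator B (Vj \<omega>) * thf (Vj \<omega>) \<partial>M)" .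
    qed
  qed
  have thFJ: "(\<lambda>\<omega>. thf (Vj \<omega>)) \<in> borel_measurable FJ" unfolding FJ_def by (rule meas_vimage[OF VjM thfm])
  have VjS: "Vj \<in> space M \<rightarrow> space borel" by simp
  have "AE \<omega> in M. real_cond_exp M FJ phi \<omega> = thf (Vj \<omega>)"
  proof (rule SJ.real_cond_exp_charact)
    fix S assume "S \<in> sets FJ"
    then obtain B where B: "B \<in> sets borel" "S = Vj -` B \<inter> space M"
      unfolding FJ_def sets_vimage_algebra2[OF VjS] by auto
    have ind: "indicator S \<omega> = indicator B (Vj \<omega>)" if "\<omega> \<in> space M" for \<omega> :: 'o
      using that B(2) by (simp add: indicator_def)
    have "(\<integral>\<omega>\<in>S. phi \<omega> \<partial>M) = (\<integral>\<omega>. indicator B (Vj \<omega>) * phi \<omega> \<partial>M)"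
      unfolding set_lebesgue_integral_def by (rule Bochner_Integration.integral_cong) (simp_all add: ind)
    also have "\<dots> = (\<integral>\<omega>. indicator B (Vj \<omega>) * thf (Vj \<omega>) \<partial>M)" using main B(1) by blast
    also have "\<dots> = (\<integral>\<omega>\<in>S. thf (Vj \<omega>) \<partial>M)"
      unfolding set_lebesgue_integral_def by (rule Bochner_Integration.integral_cong) (simp_all add: ind)
    finally show "(\<integral>\<omega>\<in>S. phi \<omega> \<partial>M) = (\<integral>\<omega>\<in>S. thf (Vj \<omega>) \<partial>M)" .
  qed (use intphi main thFJ in auto)
  then show ?thesis unfolding FJ_def phi_def Vj_def th_eq[unfolded Vj_def] .
qed

end
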